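(* For every $n \ge 3$, a flow-evaluation scheme for $(2,1)$-Group-Cut on graphs with $n$ terminals (in which $T=V$) and with edge-weights bounded by a polynomial in $n$ requires storage of $\Omega(n^2 \log n)$ bits.
   Context: $G=(V,E,w)$ is an undirected graph with integer edge weights. For a partition $\Pi$, $\mathrm{cut}_G(\Pi)=\sum_{uv\in E:\Pi(u)\neq\Pi(v)} w(uv)$; a partition agrees with demand graph $D$ if it separates every pair in $D$; $\mathrm{mincut}_G(D)$ is the minimum of $\mathrm{cut}_G(\Pi)$ over partitions of $V$ agreeing with $D$. $(2,1)$-Group-Cut is the family of demand graphs $K_{A,B}$ (complete bipartite between disjoint $A,B\subseteq T$) with $|A|=2$, $|B|=1$. A flow-evaluation scheme is a data structure with a preprocessing operation that takes $G$, terminals $T\subseteq V$, and a family $\mathcal D$ of demand graphs on $T$ and builds a data structure, and a query operation that given $D\in\mathcal D$ outputs $\mathrm{mincut}_G(D)$ using only the data structure (no access to $G$). *)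

theory Defs
  imports Complex_Main
begin

text \<open>A weighted undirected graph on vertex set V = {0..<n} (here T = V) is
  given by a symmetric weight function w; w u v = 0 means no edge.
  Weights are nonnegative integers bounded by W.\<close>
definition wgraph :: "nat \<Rightarrow> nat \<Rightarrow> (nat \<Rightarrow> nat \<Rightarrow> nat) \<Rightarrow> bool" where
  "wgraph n W w \<longleftrightarrow> (\<forall>u v. w u v = w v u) \<and> (\<forall>u. w u u = 0)
     \<and> (\<forall>u v. (u \<ge> n \<or> v \<ge> n) \<longrightarrow> w u v = 0) \<and> (\<forall>u v. w u v \<le> W)"

text \<open>A partition of V is given by a labelling; cut weight sums each edge once.\<close>
definition cut :: "nat \<Rightarrow> (nat \<Rightarrow> nat \<Rightarrow> nat) \<Rightarrow> (nat \<Rightarrow> nat) \<Rightarrow> nat" where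
  "cut n w \<Pi> = (\<Sum>(u,v)\<in>{(u,v). u < v \<and> v < n \<and> \<Pi> u \<noteq> \<Pi> v}. w u v)"

text \<open>Demand graph = set of terminal pairs to be separated.\<close>
definition agrees :: "(nat \<Rightarrow> nat) \<Rightarrow> (nat \<times> nat) set \<Rightarrow> bool" where
  "agrees \<Pi> D \<longleftrightarrow> (\<forall>(a,b)\<in>D. \<Pi> a \<noteq> \<Pi> b)"

definition mincut :: "nat \<Rightarrow> (nat \<Rightarrow> nat \<Rightarrow> nat) \<Rightarrow> (nat \<times> nat) set \<Rightarrow> nat" where
  "mincut n w D = (LEAST c. \<exists>\<Pi>. agrees \<Pi> D \<and> c = cut n w \<Pi>)"

definition KAB :: "nat set \<Rightarrow> nat set \<Rightarrow> (nat \<times> nat) set" where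
  "KAB A B = A \<times> B"

definition group_cut_21 :: "nat set \<Rightarrow> (nat \<times> nat) set set" where
  "group_cut_21 T = {KAB A B | A B. A \<subseteq> T \<and> B \<subseteq> T \<and> A \<inter> B = {} \<and> card A = 2 \<and> card B = 1}"

text \<open>A flow-evaluation scheme: preprocessing P builds a bit string from the graph,
  query Q answers using only that bit string; it is correct on graphs with n vertices
  (T = V = {0..<n}) and weights \<le> W.\<close>
definition flow_eval_scheme ::
  "nat \<Rightarrow> nat \<Rightarrow> ((nat \<Rightarrow> nat \<Rightarrow> nat) \<Rightarrow> bool list) \<Rightarrow> (bool list \<Rightarrow> (nat \<times> nat) set \<Rightarrow> nat) \<Rightarrow> bool" where
  "flow_eval_scheme n W P Q \<longleftrightarrow>
     (\<forall>w. wgraph n W w \<longrightarrow> (\<forall>D\<in>group_cut_21 {0..<n}. Q (P w) D = mincut n w D))"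

end

theory Submission imports Defs "HOL-Library.FuncSet" begin
lemma card_short_lists: "card {xs::bool list. length xs < L} < 2^L"
proof (induction L)
  case 0 then show ?case by simp
next
  case (Suc L)
  have eq: "{xs::bool list. length xs < Suc L} = {xs. length xs < L} \<union> {xs. set xs \<subseteq> UNIV \<and> length xs = L}"
    by auto
  have f1: "finite {xs::bool list. length xs < L}"
    using finite_lists_length_le[of "UNIV::bool set" L] by (rule finite_subset[rotated]) auto
  have c2: "card {xs::bool list. set xs \<subseteq> UNIV \<and> length xs = L} = 2^L"
    using card_lists_length_eq[of "UNIV::bool set" L] by simp
  have "card {xs::bool list. length xs < Suc L} \<le> card {xs::bool list. length xs < L} + 2^L"
    unfolding eq using card_Un_le c2 by (metis)
  then show ?case using Suc.IH by simp
qed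

lemma exists_long:
  assumes "finite (A::bool list set)" "2^L \<le> card A"
  shows "\<exists>x\<in>A. L \<le> length x"
proof (rule ccontr)
  assume "\<not> ?thesis"
  then have "A \<subseteq> {xs. length xs < L}" by auto
  moreover have "finite {xs::bool list. length xs < L}"
    using finite_lists_length_le[of "UNIV::bool set" L] by (rule finite_subset[rotated]) auto
  ultimately have "card A \<le> card {xs::bool list. length xs < L}" by (rule card_mono[rotated])
  with card_short_lists[of L] assms(2) show False by simp
qed

lemma pow_floor_log:
  assumes "(n::nat) \<ge> 1"
  shows "2 ^ nat \<lfloor>log 2 (real n)\<rfloor> \<le> n"
proof -
  have l0: "log 2 (real n) \<ge> 0" using assms by simp
  have "real (2 ^ nat \<lfloor>log 2 (real n)\<rfloor>) = 2 powr real (nat \<lfloor>log 2 (real n)\<rfloor>)"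
    by (simp add: powr_realpow)
  also have "\<dots> \<le> 2 powr log 2 (real n)"
    using l0 by (intro powr_mono) auto
  also have "\<dots> = real n" using assms by simp
  finally show ?thesis by linarith
qed

definition FF :: "nat \<Rightarrow> (nat \<times> nat) set" where
  "FF n = {1..(n-1) div 2} \<times> {(n-1) div 2 + 1..<n}"

definition ee :: "nat \<Rightarrow> (nat \<times> nat \<Rightarrow> nat) \<Rightarrow> nat \<Rightarrow> nat \<Rightarrow> nat" where
  "ee n f u v = (if (min u v, max u v) \<in> FF n then f (min u v, max u v) else 0)"

definition dg :: "nat \<Rightarrow> (nat \<times> nat \<Rightarrow> nat) \<Rightarrow> nat \<Rightarrow> nat" where
  "dg n f x = (\<Sum>v<n. ee n f x v)"

definition HH :: "nat \<Rightarrow> nat" where "HH n = 3 * n^2"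

definition GG :: "nat \<Rightarrow> (nat \<times> nat \<Rightarrow> nat) \<Rightarrow> nat \<Rightarrow> nat \<Rightarrow> nat" where
  "GG n f u v = ee n f u v + (if u = 0 \<and> 0 < v \<and> v < n then HH n - dg n f v
       else if v = 0 \<and> 0 < u \<and> u < n then HH n - dg n f u else 0)"

lemma FF_props: "(a,b) \<in> FF n \<Longrightarrow> 1 \<le> a \<and> a < b \<and> b < n"
  unfolding FF_def by auto

lemma ee_sym: "ee n f u v = ee n f v u"
  unfolding ee_def by (simp add: min.commute max.commute)

lemma ee_zero: assumes "u = 0 \<or> v = 0 \<or> u = v \<or> u \<ge> n \<or> v \<ge> n" shows "ee n f u v = 0"
proof -
  have "(min u v, max u v) \<notin> FF n"
  proof
    assume "(min u v, max u v) \<in> FF n"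
    then have "1 \<le> min u v \<and> min u v < max u v \<and> max u v < n" by (rule FF_props)
    with assms show False by (simp add: min_def max_def split: if_splits)
  qed
  then show ?thesis by (simp add: ee_def)
qed

lemma ee_bound: "\<forall>p\<in>FF n. f p < n \<Longrightarrow> 0 < n \<Longrightarrow> ee n f u v < n"
  unfolding ee_def by auto

lemma dg_bound: "\<forall>p\<in>FF n. f p < n \<Longrightarrow> dg n f x \<le> n^2"
proof -
  assume a: "\<forall>p\<in>FF n. f p < n"
  have "dg n f x \<le> (\<Sum>v<n. n)" unfolding dg_def
    by (rule sum_mono) (use ee_bound[OF a] less_imp_le in fastforce)
  then show ?thesis by (simp add: power2_eq_square)
qed

lemma GG_sym: "GG n f u v = GG n f v u"
  unfolding GG_def by (auto simp: ee_sym)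

lemma GG_0: "0 < x \<Longrightarrow> x < n \<Longrightarrow> GG n f 0 x = HH n - dg n f x"
  unfolding GG_def by (simp add: ee_zero)

lemma GG_inner: "0 < x \<Longrightarrow> 0 < y \<Longrightarrow> GG n f x y = ee n f x y"
  unfolding GG_def by simp

lemma wgraph_GG:
  assumes "n \<ge> 3" "\<forall>p\<in>FF n. f p < n"
  shows "wgraph n (n^3) (GG n f)"
proof -
  have H: "HH n \<le> n^3" unfolding HH_def using assms(1)
    by (simp add: power_eq_if) 
  have "GG n f u v \<le> n^3" for u v
  proof -
    have "ee n f u v < n" by (rule ee_bound[OF assms(2)]) (use assms(1) in simp)
    moreover have "n \<le> n^3" using assms(1) by (simp add: power_eq_if)
    ultimately show ?thesis unfolding GG_def using H
      by (auto simp: ee_zero intro: order.trans[OF diff_le_self])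
  qed
  moreover have "GG n f u u = 0" for u unfolding GG_def by (simp add: ee_zero)
  moreover have "u \<ge> n \<or> v \<ge> n \<Longrightarrow> GG n f u v = 0" for u v
    unfolding GG_def using ee_zero[of u v n f] by auto
  ultimately show ?thesis unfolding wgraph_def using GG_sym by blast
qed

lemma deg_GG:
  assumes "\<forall>p\<in>FF n. f p < n" "0 < x" "x < n"
  shows "(\<Sum>v<n. GG n f x v) = HH n"
proof -
  have "(\<Sum>v<n. GG n f x v) = (\<Sum>v<n. ee n f x v) + (\<Sum>v<n. if v = 0 then HH n - dg n f x else 0)"
    unfolding GG_def using assms by (simp add: sum.distrib)
  also have "(\<Sum>v<n. if v = 0 then HH n - dg n f x else 0) = HH n - dg n f x"
    using assms by (simp add: sum.delta)
  also have "dg n f x \<le> HH n" using dg_bound[OF assms(1), of x] unfolding HH_def by simp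
  ultimately show ?thesis unfolding dg_def by simp
qed


lemma cut_set:
  assumes sym: "\<forall>u v. w u v = w v u" and S: "S \<subseteq> {..<n}"
  shows "cut n w (\<lambda>v. if v \<in> S then 1 else 0) = (\<Sum>u\<in>S. \<Sum>v\<in>{..<n}-S. w u v)"
proof -
  let ?P = "\<lambda>v::nat. if v \<in> S then 1::nat else 0"
  let ?g = "\<lambda>(u::nat,v::nat). (min u v, max u v)"
  let ?C = "{(u,v). u < v \<and> v < n \<and> ?P u \<noteq> ?P v}"
  have fS: "finite S" using S finite_subset by blast
  have C: "?C = ?g ` (S \<times> ({..<n}-S))"
  proof (rule set_eqI, rule iffI)
    fix p assume "p \<in> ?C"
    then obtain u v where p: "p = (u,v)" "u < v" "v < n" "?P u \<noteq> ?P v" by auto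
    show "p \<in> ?g ` (S \<times> ({..<n}-S))"
    proof (cases "u \<in> S")
      case True
      then have "v \<notin> S" using p by auto
      then show ?thesis using p True by (auto intro!: image_eqI[of _ _ "(u,v)"])
    next
      case False
      then have "v \<in> S" using p by (auto split: if_splits)
      then show ?thesis using p False by (auto intro!: image_eqI[of _ _ "(v,u)"])
    qed
  next
    fix p assume "p \<in> ?g ` (S \<times> ({..<n}-S))"
    then obtain u v where p: "p = (min u v, max u v)" "u \<in> S" "v < n" "v \<notin> S" by auto
    then have "u < n" "u \<noteq> v" using S by auto
    with p show "p \<in> ?C" by (auto simp: min_def max_def)
  qed
  have inj: "inj_on ?g (S \<times> ({..<n}-S))"
    by (auto simp: inj_on_def min_def max_def split: if_splits)
  have "cut n w ?P = (\<Sum>p\<in>?C. case p of (u,v) \<Rightarrow> w u v)" unfolding cut_def by simp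
  also have "\<dots> = (\<Sum>p\<in>S \<times> ({..<n}-S). (case ?g p of (u,v) \<Rightarrow> w u v))"
    unfolding C by (subst sum.reindex[OF inj]) (simp add: comp_def)
  also have "\<dots> = (\<Sum>p\<in>S \<times> ({..<n}-S). (case p of (u,v) \<Rightarrow> w u v))"
    by (rule sum.cong) (auto simp: min_def max_def sym)
  also have "\<dots> = (\<Sum>u\<in>S. \<Sum>v\<in>{..<n}-S. w u v)"
    by (subst sum.cartesian_product[symmetric]) simp
  finally show ?thesis .
qed


lemma GG_0_big:
  assumes "\<forall>p\<in>FF n. f p < n" "0 < x" "x < n"
  shows "2 * n^2 \<le> GG n f 0 x"
  using GG_0[OF assms(2,3), of f] dg_bound[OF assms(1), of x] unfolding HH_def by simp

lemma mincut_GG: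
  assumes n3: "n \<ge> 3" and fb: "\<forall>p\<in>FF n. f p < n"
    and x: "0 < x" "x < n" and y: "0 < y" "y < n" "x \<noteq> y"
  shows "mincut n (GG n f) (KAB {x,y} {0}) = 2 * HH n - 2 * ee n f x y"
proof -
  let ?w = "GG n f"
  let ?P0 = "\<lambda>v::nat. if v \<in> {x,y} then 1::nat else 0"
  have sym: "\<forall>u v. ?w u v = ?w v u" using GG_sym by blast
  have eeb: "ee n f x y < n" using ee_bound[OF fb] n3 by simp
  have Hb: "n \<le> HH n" unfolding HH_def by (simp add: power2_eq_square)
  have inner: "(\<Sum>v\<in>{..<n}-{x,y}. ?w u v) = HH n - ee n f x y" if u: "u \<in> {x,y}" for u
  proof -
    have "(\<Sum>v\<in>{..<n}-{x,y}. ?w u v) = (\<Sum>v<n. ?w u v) - (\<Sum>v\<in>{x,y}. ?w u v)"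
      by (rule sum_diff_nat) (use x y in auto)
    also have "(\<Sum>v<n. ?w u v) = HH n" using deg_GG[OF fb] u x y by auto
    also have "(\<Sum>v\<in>{x,y}. ?w u v) = ee n f x y"
      using u x y by (auto simp: GG_inner ee_sym ee_zero)
    finally show ?thesis .
  qed
  have c0: "cut n ?w ?P0 = 2 * HH n - 2 * ee n f x y"
  proof -
    have "cut n ?w ?P0 = (\<Sum>u\<in>{x,y}. \<Sum>v\<in>{..<n}-{x,y}. ?w u v)"
      by (rule cut_set[OF sym]) (use x y in auto)
    also have "\<dots> = (\<Sum>u\<in>{x,y}. HH n - ee n f x y)"
      by (rule sum.cong) (use inner in auto)
    also have "\<dots> = 2 * HH n - 2 * ee n f x y" using y by simp
    finally show ?thesis .
  qed
  have agr: "agrees pp (KAB {x,y} {0}) \<longleftrightarrow> pp x \<noteq> pp 0 \<and> pp y \<noteq> pp 0" for pp :: "nat \<Rightarrow> nat"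
    unfolding agrees_def KAB_def by auto
  have lower: "cut n ?w ?P0 \<le> cut n ?w pp" if a: "agrees pp (KAB {x,y} {0})" for pp
  proof -
    have px: "pp x \<noteq> pp 0" and py: "pp y \<noteq> pp 0" using a agr by auto
    let ?C = "{(u,v). u < v \<and> v < n \<and> pp u \<noteq> pp v}"
    have finC: "finite ?C"
      by (rule finite_subset[of _ "{..<n} \<times> {..<n}"]) auto
    show ?thesis
    proof (cases "\<forall>v<n. v \<noteq> x \<longrightarrow> v \<noteq> y \<longrightarrow> pp v = pp 0")
      case True
      have sub: "{(u,v). u < v \<and> v < n \<and> ?P0 u \<noteq> ?P0 v} \<subseteq> ?C"
      proof
        fix p assume "p \<in> {(u,v). u < v \<and> v < n \<and> ?P0 u \<noteq> ?P0 v}"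
        then obtain u v where p: "p = (u,v)" "u < v" "v < n" "?P0 u \<noteq> ?P0 v" by auto
        have un: "u < n" using p by simp
        have "pp u \<noteq> pp v"
        proof (cases "u \<in> {x,y}")
          case True
          then have "v \<notin> {x,y}" using p by auto
          then have "pp v = pp 0" using \<open>\<forall>v<n. _\<close> p by auto
          with True px py show ?thesis by auto
        next
          case False
          then have "v \<in> {x,y}" using p by (auto split: if_splits)
          have "pp u = pp 0" using \<open>\<forall>v<n. _\<close> False un by auto
          with \<open>v \<in> {x,y}\<close> px py show ?thesis by auto
        qed
        then show "p \<in> ?C" using p by auto
      qed
      show ?thesis unfolding cut_def
        by (rule sum_mono2[OF finC sub]) simp
    next
      case False
      then obtain v where v: "v < n" "v \<noteq> x" "v \<noteq> y" "pp v \<noteq> pp 0" by auto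
      then have v0: "0 < v" by (cases v) auto
      have sub: "{(0,x),(0,y),(0,v)} \<subseteq> ?C" using x y v v0 px py by auto
      have "(\<Sum>p\<in>{(0,x),(0,y),(0,v)}. case p of (a,b) \<Rightarrow> ?w a b) \<le> cut n ?w pp"
        unfolding cut_def by (rule sum_mono2[OF finC sub]) simp
      moreover have "(\<Sum>p\<in>{(0,x),(0,y),(0,v)}. case p of (a,b) \<Rightarrow> ?w a b) = ?w 0 x + ?w 0 y + ?w 0 v"
        using y v by simp
      moreover have "2 * n^2 \<le> ?w 0 x" "2 * n^2 \<le> ?w 0 y" "2 * n^2 \<le> ?w 0 v"
        using GG_0_big[OF fb] x y v v0 by auto
      ultimately have "6 * n^2 \<le> cut n ?w pp" by linarith
      moreover have "cut n ?w ?P0 \<le> 6 * n^2" using c0 unfolding HH_def by simp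
      ultimately show ?thesis by linarith
    qed
  qed
  have a0: "agrees ?P0 (KAB {x,y} {0})" using agr x y by auto
  show ?thesis unfolding mincut_def c0[symmetric]
    by (rule Least_equality) (use a0 lower in auto)
qed


lemma card_FF: "card (FF n) = ((n-1) div 2) * (n - 1 - (n-1) div 2)"
  unfolding FF_def by (simp add: card_cartesian_product)

lemma size_bound:
  assumes n3: "(n::nat) \<ge> 3"
  shows "real n ^ 2 \<le> 36 * real (((n-1) div 2) * (n - 1 - (n-1) div 2))"
proof -
  define a where "a = (n-1) div 2"
  have a1: "2 * a + 2 \<ge> n" "2 * a \<le> n - 1" unfolding a_def using n3 by auto
  have ra: "2 * real a \<ge> real n - 2" using a1 by linarith
  have rb: "2 * real (n - 1 - a) \<ge> real n - 1" using a1 n3 by (simp add: of_nat_diff)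
  have "(real n - 2) * (real n - 1) \<le> (2 * real a) * (2 * real (n - 1 - a))"
    by (rule mult_mono) (use ra rb n3 in auto)
  moreover have "real n ^ 2 \<le> 9 * ((real n - 2) * (real n - 1))"
  proof -
    have "0 \<le> (real n - 3) * (8 * real n - 3)" using n3 by simp
    then show ?thesis by (simp add: algebra_simps power2_eq_square)
  qed
  ultimately show ?thesis unfolding a_def[symmetric] by simp
qed

lemma main_bound:
  fixes n :: nat and P :: "(nat \<Rightarrow> nat \<Rightarrow> nat) \<Rightarrow> bool list" and Q :: "bool list \<Rightarrow> (nat \<times> nat) set \<Rightarrow> nat"
  assumes n3: "n \<ge> 3" and sch: "flow_eval_scheme n (n ^ 3) P Q"
  shows "\<exists>w. wgraph n (n ^ 3) w \<and> 1/72 * real n ^ 2 * log 2 (real n) \<le> real (length (P w))"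
proof -
  define j where "j = nat \<lfloor>log 2 (real n)\<rfloor>"
  define SS where "SS = PiE (FF n) (\<lambda>_. {0..<(2::nat)^j})"
  have pj: "2^j \<le> n" unfolding j_def by (rule pow_floor_log) (use n3 in simp)
  have fbSS: "\<forall>p\<in>FF n. f p < n" if "f \<in> SS" for f
    using that pj unfolding SS_def by (auto simp: PiE_iff)
  have finFF: "finite (FF n)" unfolding FF_def by simp
  have HH: "n \<le> HH n" unfolding HH_def by (simp add: power2_eq_square)
  have inj: "inj_on (\<lambda>f. P (GG n f)) SS"
  proof (rule inj_onI)
    fix f f' assume f: "f \<in> SS" and f': "f' \<in> SS" and eq: "P (GG n f) = P (GG n f')"
    show "f = f'"
    proof (rule PiE_ext)
      show "f \<in> PiE (FF n) (\<lambda>_. {0..<(2::nat)^j})" using f unfolding SS_def .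
      show "f' \<in> PiE (FF n) (\<lambda>_. {0..<(2::nat)^j})" using f' unfolding SS_def .
      fix p assume p: "p \<in> FF n"
      obtain a b where ab: "p = (a,b)" by (cases p)
      have abp: "1 \<le> a" "a < b" "b < n" using FF_props p ab by auto
      have D: "KAB {a,b} {0} \<in> group_cut_21 {0..<n}"
        unfolding group_cut_21_def using abp by (intro CollectI exI[of _ "{a,b}"] exI[of _ "{0}"]) auto
      have "mincut n (GG n f) (KAB {a,b} {0}) = mincut n (GG n f') (KAB {a,b} {0})"
        using sch wgraph_GG[OF n3 fbSS[OF f]] wgraph_GG[OF n3 fbSS[OF f']] D eq
        unfolding flow_eval_scheme_def by metis
      then have "2 * HH n - 2 * ee n f a b = 2 * HH n - 2 * ee n f' a b"
        using mincut_GG[OF n3 fbSS[OF f]] mincut_GG[OF n3 fbSS[OF f']] abp by simp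
      moreover have "ee n f a b < n" "ee n f' a b < n"
        using ee_bound fbSS f f' n3 by auto
      ultimately have "ee n f a b = ee n f' a b" using HH by linarith
      then show "f p = f' p" using p ab abp unfolding ee_def by simp
    qed
  qed
  define N where "N = card (FF n)"
  have finSS: "finite SS" unfolding SS_def by (rule finite_PiE[OF finFF]) simp
  have cardSS: "card SS = 2 ^ (j * N)"
    unfolding SS_def N_def by (simp add: card_PiE[OF finFF] power_mult)
  have "\<exists>x\<in>(\<lambda>f. P (GG n f)) ` SS. j * N \<le> length x"
    by (rule exists_long) (use finSS cardSS card_image[OF inj] in auto)
  then obtain f where f: "f \<in> SS" and len: "j * N \<le> length (P (GG n f))" by auto
  show "\<exists>w. wgraph n (n ^ 3) w \<and> 1/72 * real n ^ 2 * log 2 (real n) \<le> real (length (P w))"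
  proof (intro exI[of _ "GG n f"] conjI)
    show "wgraph n (n ^ 3) (GG n f)" by (rule wgraph_GG[OF n3 fbSS[OF f]])
    have lg1: "1 \<le> log 2 (real n)" using n3 by simp
    have fl1: "1 \<le> \<lfloor>log 2 (real n)\<rfloor>" using lg1 by (simp add: le_floor_iff)
    have rj: "real j = of_int \<lfloor>log 2 (real n)\<rfloor>" unfolding j_def using fl1 by simp
    have jl: "log 2 (real n) < real j + 1" unfolding rj using floor_correct[of "log 2 (real n)"] by simp
    have j1: "1 \<le> real j" unfolding rj using fl1 by simp
    have lg: "log 2 (real n) \<le> 2 * real j" using jl j1 by linarith
    have nN: "real n ^ 2 \<le> 36 * real N" unfolding N_def card_FF by (rule size_bound[OF n3])
    have "real n ^ 2 * log 2 (real n) \<le> (36 * real N) * (2 * real j)"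
      by (rule mult_mono) (use nN lg lg1 in auto)
    then have "1/72 * real n ^ 2 * log 2 (real n) \<le> real (j * N)" by (simp add: algebra_simps)
    also have "\<dots> \<le> real (length (P (GG n f)))" using len by (simp only: of_nat_le_iff)
    finally show "1/72 * real n ^ 2 * log 2 (real n) \<le> real (length (P (GG n f)))" .
  qed
qed

theorem theorem14:
  "\<exists>k::nat. \<exists>c::real. c > 0 \<and>
     (\<forall>n::nat. n \<ge> 3 \<longrightarrow>
        (\<forall>P Q. flow_eval_scheme n (n ^ k) P Q \<longrightarrow>
           (\<exists>w. wgraph n (n ^ k) w \<and>
                real (length (P w)) \<ge> c * real n ^ 2 * log 2 (real n))))"
  by (rule exI[of _ 3], rule exI[of _ "1/72"], rule conjI, simp, intro allI impI main_bound)

end
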